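(* Let $\theta\in\mathbb{R}$, $k>0$, $\sigma\ge0$, and consider on $\mathbb{R}^2$ $$\dot\xi=-\big(z+k+\sigma(\theta+z)^2\big)\xi,\qquad \dot z=\xi^2,$$ with output $y=\xi$. Then the system is forward complete, Lagrange and Lyapunov stable (with respect to the full state), every point $(0,z)$ is an equilibrium, and the system is GAOS with respect to the output $\xi$. However, when $\sigma=0$ the system is not UGAOS: there is no $T>0$ such that $|\xi(t)|\le 1/2$ for all $t\ge T$ and all initial conditions with $|(\xi_0,z_0)|\le\sqrt{1+(k+1)^2}$. *)

theory Defs
  imports "HOL-Analysis.Analysis"
begin

definition is_sol :: "real \<Rightarrow> real \<Rightarrow> real \<Rightarrow> (real \<Rightarrow> real) \<Rightarrow> (real \<Rightarrow> real) \<Rightarrow> bool" where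
  "is_sol \<theta> k \<sigma> \<xi> z \<longleftrightarrow>
     (\<forall>t\<ge>0. (\<xi> has_real_derivative (- (z t + k + \<sigma> * (\<theta> + z t)^2) * \<xi> t)) (at t within {0..})
           \<and> (z has_real_derivative (\<xi> t)^2) (at t within {0..}))"

definition forward_complete :: "real \<Rightarrow> real \<Rightarrow> real \<Rightarrow> bool" where
  "forward_complete \<theta> k \<sigma> \<longleftrightarrow>
     (\<forall>\<xi>0 z0. \<exists>\<xi> z. is_sol \<theta> k \<sigma> \<xi> z \<and> \<xi> 0 = \<xi>0 \<and> z 0 = z0)"

definition lagrange_stable :: "real \<Rightarrow> real \<Rightarrow> real \<Rightarrow> bool" where
  "lagrange_stable \<theta> k \<sigma> \<longleftrightarrow>
     (\<forall>r\<ge>0. \<exists>R. \<forall>\<xi> z. is_sol \<theta> k \<sigma> \<xi> z \<longrightarrow> norm (\<xi> 0, z 0) \<le> r \<longrightarrow>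
        (\<forall>t\<ge>0. norm (\<xi> t, z t) \<le> R))"

definition lyapunov_stable :: "real \<Rightarrow> real \<Rightarrow> real \<Rightarrow> bool" where
  "lyapunov_stable \<theta> k \<sigma> \<longleftrightarrow>
     (\<forall>\<epsilon>>0. \<exists>\<delta>>0. \<forall>\<xi> z. is_sol \<theta> k \<sigma> \<xi> z \<longrightarrow> norm (\<xi> 0, z 0) \<le> \<delta> \<longrightarrow>
        (\<forall>t\<ge>0. norm (\<xi> t, z t) \<le> \<epsilon>))"

definition is_equilibrium :: "real \<Rightarrow> real \<Rightarrow> real \<Rightarrow> real \<times> real \<Rightarrow> bool" where
  "is_equilibrium \<theta> k \<sigma> p \<longleftrightarrow> is_sol \<theta> k \<sigma> (\<lambda>_. fst p) (\<lambda>_. snd p)"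

definition GAOS :: "real \<Rightarrow> real \<Rightarrow> real \<Rightarrow> bool" where
  "GAOS \<theta> k \<sigma> \<longleftrightarrow>
     (\<forall>\<epsilon>>0. \<exists>\<delta>>0. \<forall>\<xi> z. is_sol \<theta> k \<sigma> \<xi> z \<longrightarrow> norm (\<xi> 0, z 0) \<le> \<delta> \<longrightarrow>
        (\<forall>t\<ge>0. \<bar>\<xi> t\<bar> \<le> \<epsilon>)) \<and>
     (\<forall>r\<ge>0. \<exists>R. \<forall>\<xi> z. is_sol \<theta> k \<sigma> \<xi> z \<longrightarrow> norm (\<xi> 0, z 0) \<le> r \<longrightarrow>
        (\<forall>t\<ge>0. \<bar>\<xi> t\<bar> \<le> R)) \<and>
     (\<forall>\<xi> z. is_sol \<theta> k \<sigma> \<xi> z \<longrightarrow> (\<xi> \<longlongrightarrow> 0) at_top)"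

end

theory Submission
  imports Defs
begin


lemma deriv_mono_within:
  fixes f f' :: "real \<Rightarrow> real"
  assumes der: "\<And>t. 0 \<le> t \<Longrightarrow> (f has_real_derivative f' t) (at t within {0..})"
    and nn: "\<And>x. s < x \<Longrightarrow> x < t \<Longrightarrow> f' x \<ge> 0" and s0: "0 \<le> s" and st: "s \<le> t"
  shows "f s \<le> f t"
proof (cases "s = t")
  case True then show ?thesis by simp
next
  case False
  with st have lt: "s < t" by simp
  have cont: "continuous_on {s..t} f"
    unfolding continuous_on_eq_continuous_within
  proof
    fix x assume x: "x \<in> {s..t}"
    have "continuous (at x within {0..}) f"
      using s0 x by (intro DERIV_continuous[OF der]) auto
    then show "continuous (at x within {s..t}) f"
      by (rule continuous_within_subset) (use s0 in auto)
  qed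
  have dat: "(f has_real_derivative f' x) (at x)" if "0 < x" for x
  proof -
    have "(f has_real_derivative f' x) (at x within {0<..})"
      by (rule DERIV_subset[OF der[of x]]) (use that in auto)
    moreover have "at x within {0<..} = at x" by (rule at_within_open) (use that in auto)
    ultimately show ?thesis by simp
  qed
  obtain l z where z: "s < z" "z < t" "DERIV f z :> l" "f t - f s = (t - s) * l"
  proof -
    have "f differentiable (at x)" if "s < x" "x < t" for x
      unfolding real_differentiable_def using dat[of x] s0 that by auto
    from MVT[OF lt cont this] show ?thesis using that by blast
  qed
  have "l = f' z" by (rule DERIV_unique[OF z(3) dat]) (use z s0 in linarith)
  then have "l \<ge> 0" using nn z by simp
  then have "(t - s) * l \<ge> 0" using lt by simp
  then show ?thesis using z by simp
qed

lemma normP: "norm (a::real, b::real) = sqrt (a^2 + b^2)"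
  by (simp add: norm_Pair)

lemma abs_le_normP1: "\<bar>a::real\<bar> \<le> norm (a, b::real)"
proof -
  have "sqrt (a^2) \<le> sqrt (a^2 + b^2)" by (intro real_sqrt_le_mono) simp
  then show ?thesis by (simp add: normP)
qed

lemma abs_le_normP2: "\<bar>b::real\<bar> \<le> norm (a::real, b)"
proof -
  have "sqrt (b^2) \<le> sqrt (a^2 + b^2)" by (intro real_sqrt_le_mono) simp
  then show ?thesis by (simp add: normP)
qed

lemma normP_le: "norm (a::real, b::real) \<le> \<bar>a\<bar> + \<bar>b\<bar>"
  by (simp add: normP sqrt_sum_squares_le_sum_abs)
lemma sol_z_mono:
  assumes sol: "is_sol \<theta> k \<sigma> \<xi> z" and "0 \<le> s" "s \<le> t"
  shows "z s \<le> z t"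
  by (rule deriv_mono_within[where f'="\<lambda>t. (\<xi> t)^2"]) (use sol assms in \<open>auto simp: is_sol_def\<close>)

lemma sol_W_anti:
  assumes sol: "is_sol \<theta> k \<sigma> \<xi> z" and sg: "\<sigma> \<ge> 0" and "0 \<le> s" "s \<le> t"
  shows "(\<xi> t)^2 + (z t + k)^2 \<le> (\<xi> s)^2 + (z s + k)^2"
proof -
  have d: "((\<lambda>t. - ((\<xi> t)^2 + (z t + k)^2)) has_real_derivative
      2 * \<sigma> * (\<theta> + z t)^2 * (\<xi> t)^2) (at t within {0..})" if "0 \<le> t" for t
  proof -
    have d1: "(\<xi> has_real_derivative (- (z t + k + \<sigma> * (\<theta> + z t)^2) * \<xi> t)) (at t within {0..})"
      and d2: "(z has_real_derivative (\<xi> t)^2) (at t within {0..})"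
      using sol that by (auto simp: is_sol_def)
    have "((\<lambda>t. - ((\<xi> t)^2 + (z t + k)^2)) has_real_derivative
      - (2 * \<xi> t * (- (z t + k + \<sigma> * (\<theta> + z t)^2) * \<xi> t) + 2 * (z t + k) * (\<xi> t)^2)) (at t within {0..})"
      by (auto intro!: derivative_eq_intros d1 d2)
    moreover have "- (2 * \<xi> t * (- (z t + k + \<sigma> * (\<theta> + z t)^2) * \<xi> t) + 2 * (z t + k) * (\<xi> t)^2)
       = 2 * \<sigma> * (\<theta> + z t)^2 * (\<xi> t)^2"
      by (simp add: algebra_simps power2_eq_square)
    ultimately show ?thesis by simp
  qed
  have "- ((\<xi> s)^2 + (z s + k)^2) \<le> - ((\<xi> t)^2 + (z t + k)^2)"
    by (rule deriv_mono_within[OF d]) (use sg assms in auto)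
  then show ?thesis by simp
qed

lemma equilibrium: "is_equilibrium \<theta> k \<sigma> (0, c)"
  unfolding is_equilibrium_def is_sol_def by (auto intro!: derivative_eq_intros)



lemma sq_le_of_abs: "\<bar>a::real\<bar> \<le> r \<Longrightarrow> a^2 \<le> r^2"
  using power_mono[of "\<bar>a\<bar>" r 2] by simp

lemma abs_le_of_sq: "(a::real)^2 \<le> r^2 \<Longrightarrow> 0 \<le> r \<Longrightarrow> \<bar>a\<bar> \<le> r"
  using abs_le_square_iff[of a r] by simp

lemma W0_bound:
  fixes a b k r :: real
  assumes "norm (a, b) \<le> r" "k > 0"
  shows "a^2 + (b + k)^2 \<le> (2*r + k)^2"
proof -
  have ha: "\<bar>a\<bar> \<le> r" and hb: "\<bar>b\<bar> \<le> r" using assms abs_le_normP1 abs_le_normP2 order_trans by blast+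
  have r0: "r \<ge> 0" using ha by simp
  have "a^2 \<le> r^2" using ha by (rule sq_le_of_abs)
  moreover have "(b+k)^2 \<le> (r+k)^2" using hb assms by (intro sq_le_of_abs) auto
  moreover have "r^2 + (r+k)^2 \<le> (2*r+k)^2" using r0 assms by (simp add: power2_eq_square algebra_simps)
  ultimately show ?thesis by linarith
qed

lemma lagrange: assumes "k > 0" "\<sigma> \<ge> 0" shows "lagrange_stable \<theta> k \<sigma>"
  unfolding lagrange_stable_def
proof (intro allI impI)
  fix r :: real assume r: "r \<ge> 0"
  show "\<exists>R. \<forall>\<xi> z. is_sol \<theta> k \<sigma> \<xi> z \<longrightarrow> norm (\<xi> 0, z 0) \<le> r \<longrightarrow> (\<forall>t\<ge>0. norm (\<xi> t, z t) \<le> R)"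
  proof (intro exI[of _ "4*r+3*k"] allI impI)
    fix \<xi> z and t :: real assume sol: "is_sol \<theta> k \<sigma> \<xi> z" and n0: "norm (\<xi> 0, z 0) \<le> r" and t: "0 \<le> t"
    have "(\<xi> t)^2 + (z t + k)^2 \<le> (\<xi> 0)^2 + (z 0 + k)^2"
      by (rule sol_W_anti[OF sol assms(2)]) (use t in auto)
    also have "\<dots> \<le> (2*r+k)^2" using W0_bound[OF n0 assms(1)] .
    finally have W: "(\<xi> t)^2 + (z t + k)^2 \<le> (2*r+k)^2" .
    have p1: "0 \<le> (\<xi> t)^2" "0 \<le> (z t + k)^2" by simp_all
    have "\<bar>\<xi> t\<bar> \<le> 2*r+k" using W r assms p1 by (intro abs_le_of_sq) linarith+
    moreover have "\<bar>z t + k\<bar> \<le> 2*r+k" using W r assms p1 by (intro abs_le_of_sq) linarith+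
    ultimately show "norm (\<xi> t, z t) \<le> 4*r+3*k" using normP_le[of "\<xi> t" "z t"] assms by linarith
  qed
qed

lemma lyapunov: assumes "k > 0" "\<sigma> \<ge> 0" shows "lyapunov_stable \<theta> k \<sigma>"
  unfolding lyapunov_stable_def
proof (intro allI impI)
  fix \<epsilon> :: real assume e: "\<epsilon> > 0"
  show "\<exists>\<delta>>0. \<forall>\<xi> z. is_sol \<theta> k \<sigma> \<xi> z \<longrightarrow> norm (\<xi> 0, z 0) \<le> \<delta> \<longrightarrow> (\<forall>t\<ge>0. norm (\<xi> t, z t) \<le> \<epsilon>)"
  proof (intro exI[of _ "min k (\<epsilon>/3)"] conjI allI impI)
    show "min k (\<epsilon>/3) > 0" using e assms by simp
    fix \<xi> z and t :: real assume sol: "is_sol \<theta> k \<sigma> \<xi> z" and n0: "norm (\<xi> 0, z 0) \<le> min k (\<epsilon>/3)" and t: "0 \<le> t"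
    define d where "d = min k (\<epsilon>/3)"
    have ha: "\<bar>\<xi> 0\<bar> \<le> d" and hb: "\<bar>z 0\<bar> \<le> d" using n0 abs_le_normP1 abs_le_normP2 order_trans unfolding d_def by blast+
    have dk: "d \<le> k" "d \<le> \<epsilon>/3" unfolding d_def by auto
    have W: "(\<xi> t)^2 + (z t + k)^2 \<le> (\<xi> 0)^2 + (z 0 + k)^2"
      by (rule sol_W_anti[OF sol assms(2)]) (use t in auto)
    have zm: "z 0 \<le> z t" by (rule sol_z_mono[OF sol]) (use t in auto)
    have zk: "0 \<le> z 0 + k" using hb dk by linarith
    have "(z 0 + k)^2 \<le> (z t + k)^2" using zm zk by (intro power_mono) auto
    then have "(\<xi> t)^2 \<le> (\<xi> 0)^2" using W by linarith
    then have x1: "\<bar>\<xi> t\<bar> \<le> \<bar>\<xi> 0\<bar>" by (simp add: abs_le_square_iff)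
    have "(\<xi> 0)^2 + (z 0 + k)^2 \<le> (\<bar>\<xi> 0\<bar> + (z 0 + k))^2"
      proof -
      have "0 \<le> \<bar>\<xi> 0\<bar> * (z 0 + k)" using zk by simp
      then show ?thesis by (simp add: power2_eq_square algebra_simps)
    qed
    then have "(z t + k)^2 \<le> (\<bar>\<xi> 0\<bar> + (z 0 + k))^2" using W by (smt (verit) zero_le_power2)
    then have "\<bar>z t + k\<bar> \<le> \<bar>\<xi> 0\<bar> + (z 0 + k)" using zk by (intro abs_le_of_sq) auto
    then have "\<bar>z t\<bar> \<le> 2*d" using zm zk ha hb by linarith
    then show "norm (\<xi> t, z t) \<le> \<epsilon>" using normP_le[of "\<xi> t" "z t"] x1 ha dk by linarith
  qed
qed



lemma mono_tendsto:
  fixes f :: "real \<Rightarrow> real"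
  assumes mono: "\<And>s t. 0 \<le> s \<Longrightarrow> s \<le> t \<Longrightarrow> f s \<le> f t" and bd: "\<And>t. 0 \<le> t \<Longrightarrow> f t \<le> B"
  shows "\<exists>l. (f \<longlongrightarrow> l) at_top"
proof -
  define l where "l = (SUP t\<in>{0..}. f t)"
  have bdd: "bdd_above (f ` {0..})" using bd by (auto intro!: bdd_aboveI2)
  have up: "f t \<le> l" if "0 \<le> t" for t unfolding l_def by (rule cSUP_upper) (use that bdd in auto)
  have "(f \<longlongrightarrow> l) at_top"
  proof (rule order_tendstoI)
    fix y assume "y < l"
    then obtain t0 where t0: "t0 \<ge> 0" "y < f t0" unfolding l_def using less_cSUP_iff[OF _ bdd] by auto
    show "\<forall>\<^sub>F x in at_top. y < f x"
      unfolding eventually_at_top_linorder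
      by (rule exI[of _ t0]) (use t0 mono in \<open>auto intro: less_le_trans\<close>)
  next
    fix y assume "l < y"
    show "\<forall>\<^sub>F x in at_top. f x < y"
      unfolding eventually_at_top_linorder
      by (rule exI[of _ 0]) (use up \<open>l < y\<close> in \<open>auto intro: le_less_trans\<close>)
  qed
  then show ?thesis by blast
qed

lemma attract:
  assumes k: "k > 0" and sg: "\<sigma> \<ge> 0" and sol: "is_sol \<theta> k \<sigma> \<xi> z"
  shows "(\<xi> \<longlongrightarrow> 0) at_top"
proof -
  define W where "W t = (\<xi> t)^2 + (z t + k)^2" for t
  define B where "B = sqrt (W 0)"
  have Wa: "W t \<le> W s" if "0 \<le> s" "s \<le> t" for s t
    unfolding W_def by (rule sol_W_anti[OF sol sg that])
  have zb: "z t \<le> B - k" if "0 \<le> t" for t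
  proof -
    have "(z t + k)^2 \<le> W 0" using Wa[of 0 t] that unfolding W_def
      by (smt (verit) zero_le_power2)
    also have "\<dots> = B^2" unfolding B_def W_def by simp
    finally have "\<bar>z t + k\<bar> \<le> B" by (intro abs_le_of_sq) (auto simp: B_def W_def)
    then show ?thesis by linarith
  qed
  obtain lz where lz: "(z \<longlongrightarrow> lz) at_top"
    using mono_tendsto[of z "B - k"] sol_z_mono[OF sol] zb by blast
  obtain lw where lw: "((\<lambda>t. - W t) \<longlongrightarrow> lw) at_top"
    using mono_tendsto[of "\<lambda>t. - W t" 0] Wa unfolding W_def
    by (smt (verit) zero_le_power2)
  define L where "L = - lw - (lz + k)^2"
  have eq: "(\<lambda>t. (\<xi> t)^2) = (\<lambda>t. - (- W t) - (z t + k)^2)" unfolding W_def by auto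
  have lim: "((\<lambda>t. (\<xi> t)^2) \<longlongrightarrow> L) at_top"
    unfolding eq L_def by (intro tendsto_intros lw lz)
  have L0: "L \<ge> 0"
    by (rule tendsto_lowerbound[OF lim]) auto
  have L1: "L \<le> 0"
  proof (rule ccontr)
    assume "\<not> L \<le> 0"
    then have Lp: "L > 0" by simp
    have "\<forall>\<^sub>F t in at_top. L/2 < (\<xi> t)^2" by (rule order_tendstoD(1)[OF lim]) (use Lp in simp)
    then obtain N where N: "\<And>t. t \<ge> N \<Longrightarrow> L/2 < (\<xi> t)^2" unfolding eventually_at_top_linorder by blast
    define t0 where "t0 = max N 0"
    define T where "T = t0 + 2 * (B - k - z t0 + 1) / L"
    have t00: "t0 \<ge> 0" unfolding t0_def by simp
    have zt0: "z t0 \<le> B - k" using zb t00 .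
    have Tt0: "t0 \<le> T" unfolding T_def using zt0 Lp by simp
    have "z t0 - L/2 * t0 \<le> z T - L/2 * T"
    proof (rule deriv_mono_within[where f'="\<lambda>t. (\<xi> t)^2 - L/2" and f="\<lambda>t. z t - L/2 * t"])
      fix t :: real assume "0 \<le> t"
      then have "(z has_real_derivative (\<xi> t)^2) (at t within {0..})" using sol by (auto simp: is_sol_def)
      then show "((\<lambda>t. z t - L/2 * t) has_real_derivative (\<xi> t)^2 - L/2) (at t within {0..})"
        by (auto intro!: derivative_eq_intros)
    next
      fix x assume "t0 < x" "x < T"
      then have "x \<ge> N" unfolding t0_def by simp
      then show "0 \<le> (\<xi> x)^2 - L/2" using N by fastforce
    qed (use t00 Tt0 in auto)
    then have "z T \<ge> z t0 + L/2 * (T - t0)" by (simp add: right_diff_distrib)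
    also have "L/2 * (T - t0) = B - k - z t0 + 1" unfolding T_def using Lp by simp
    finally have "z T \<ge> B - k + 1" by simp
    moreover have "z T \<le> B - k" using zb t00 Tt0 by simp
    ultimately show False by simp
  qed
  have "((\<lambda>t. (\<xi> t)^2) \<longlongrightarrow> 0) at_top" using lim L0 L1 by simp
  then have "((\<lambda>t. sqrt ((\<xi> t)^2)) \<longlongrightarrow> sqrt 0) at_top" by (rule tendsto_real_sqrt)
  then have "((\<lambda>t. \<bar>\<xi> t\<bar>) \<longlongrightarrow> 0) at_top" by simp
  then show ?thesis by (simp add: tendsto_rabs_zero_iff)
qed

lemma gaos: assumes "k > 0" "\<sigma> \<ge> 0" shows "GAOS \<theta> k \<sigma>"
proof -
  have 1: "lyapunov_stable \<theta> k \<sigma>" "lagrange_stable \<theta> k \<sigma>" using lyapunov lagrange assms by auto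
  show ?thesis unfolding GAOS_def
  proof (intro conjI allI impI)
    fix \<epsilon> :: real assume "\<epsilon> > 0"
    then obtain \<delta> where d: "\<delta> > 0" "\<And>\<xi> z. is_sol \<theta> k \<sigma> \<xi> z \<Longrightarrow> norm (\<xi> 0, z 0) \<le> \<delta> \<Longrightarrow> (\<forall>t\<ge>0. norm (\<xi> t, z t) \<le> \<epsilon>)"
      using 1(1) unfolding lyapunov_stable_def by blast
    show "\<exists>\<delta>>0. \<forall>\<xi> z. is_sol \<theta> k \<sigma> \<xi> z \<longrightarrow> norm (\<xi> 0, z 0) \<le> \<delta> \<longrightarrow> (\<forall>t\<ge>0. \<bar>\<xi> t\<bar> \<le> \<epsilon>)"
      using d abs_le_normP1 order_trans by blast
  next
    fix r :: real assume "r \<ge> 0"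
    then obtain R where d: "\<And>\<xi> z. is_sol \<theta> k \<sigma> \<xi> z \<Longrightarrow> norm (\<xi> 0, z 0) \<le> r \<Longrightarrow> (\<forall>t\<ge>0. norm (\<xi> t, z t) \<le> R)"
      using 1(2) unfolding lagrange_stable_def by blast
    show "\<exists>R. \<forall>\<xi> z. is_sol \<theta> k \<sigma> \<xi> z \<longrightarrow> norm (\<xi> 0, z 0) \<le> r \<longrightarrow> (\<forall>t\<ge>0. \<bar>\<xi> t\<bar> \<le> R)"
      using d abs_le_normP1 order_trans by blast
  next
    fix \<xi> z assume "is_sol \<theta> k \<sigma> \<xi> z"
    then show "(\<xi> \<longlongrightarrow> 0) at_top" using attract assms by blast
  qed
qed

lemma not_ugaos:
  assumes k: "k > 0"
  shows "\<not> (\<exists>T>0. \<forall>\<xi> z. is_sol \<theta> k 0 \<xi> z \<longrightarrow>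
          norm (\<xi> 0, z 0) \<le> sqrt (1 + (k + 1)^2) \<longrightarrow> (\<forall>t\<ge>T. \<bar>\<xi> t\<bar> \<le> 1/2))"
proof
  assume "\<exists>T>0. \<forall>\<xi> z. is_sol \<theta> k 0 \<xi> z \<longrightarrow>
          norm (\<xi> 0, z 0) \<le> sqrt (1 + (k + 1)^2) \<longrightarrow> (\<forall>t\<ge>T. \<bar>\<xi> t\<bar> \<le> 1/2)"
  then obtain T :: real where T: "T > 0" and H: "\<And>\<xi> z. is_sol \<theta> k 0 \<xi> z \<Longrightarrow>
          norm (\<xi> 0, z 0) \<le> sqrt (1 + (k + 1)^2) \<Longrightarrow> (\<forall>t\<ge>T. \<bar>\<xi> t\<bar> \<le> 1/2)" by blast
  define \<xi> where "\<xi> t = inverse (cosh (t - T))" for t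
  define z where "z t = tanh (t - T) - k" for t
  have sol: "is_sol \<theta> k 0 \<xi> z" unfolding is_sol_def
  proof (intro allI impI conjI)
    fix t :: real
    have "(\<xi> has_real_derivative (- (z t + k + 0 * (\<theta> + z t)^2) * \<xi> t)) (at t)"
      unfolding \<xi>_def z_def
      by (auto intro!: derivative_eq_intros simp: tanh_def field_simps power2_eq_square)
    then show "(\<xi> has_real_derivative (- (z t + k + 0 * (\<theta> + z t)^2) * \<xi> t)) (at t within {0..})"
      by (rule has_field_derivative_at_within)
    have "(z has_real_derivative (\<xi> t)^2) (at t)"
      unfolding \<xi>_def z_def
      by (auto intro!: derivative_eq_intros simp: tanh_def field_simps power2_eq_square cosh_square_eq[unfolded power2_eq_square])
    then show "(z has_real_derivative (\<xi> t)^2) (at t within {0..})"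
      by (rule has_field_derivative_at_within)
  qed
  have "cosh (0 - T) \<ge> 1" by (rule cosh_real_ge_1)
  then have x0: "\<xi> 0 > 0" "\<xi> 0 \<le> 1" unfolding \<xi>_def by (auto simp: field_simps)
  then have x0s: "(\<xi> 0)^2 \<le> 1" by (simp add: power_le_one)
  have "\<bar>tanh (0 - T)\<bar> < 1" using tanh_real_lt_1[of "0-T"] tanh_real_gt_neg1[of "0-T"] by linarith
  then have "\<bar>z 0\<bar> \<le> k + 1" unfolding z_def using k by linarith
  then have "(z 0)^2 \<le> (k+1)^2" by (rule sq_le_of_abs)
  then have "norm (\<xi> 0, z 0) \<le> sqrt (1 + (k + 1)^2)" unfolding normP using x0s
    by (intro real_sqrt_le_mono) linarith
  then have "\<bar>\<xi> T\<bar> \<le> 1/2" using H[OF sol] by auto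
  then show False unfolding \<xi>_def by simp
qed



context
  fixes \<theta> k \<sigma> \<xi>0 z0 :: real
  assumes k: "k > 0" and sg: "\<sigma> \<ge> 0" and x0: "\<xi>0 \<noteq> 0"
begin

definition "FF z = (z + k)^2 + (2*\<sigma>/3) * (\<theta> + z)^3"
definition "CC = \<xi>0^2 + FF z0"
definition "GG z = CC - FF z"
definition "QQ x y = x + y + 2*k + (2*\<sigma>/3) * ((\<theta>+x)^2 + (\<theta>+x)*(\<theta>+y) + (\<theta>+y)^2)"

lemma FF_diff: "FF x - FF y = (x - y) * QQ x y"
  unfolding FF_def QQ_def by (simp add: power2_eq_square power3_eq_cube field_simps)

lemma GG_z0: "GG z0 = \<xi>0^2" unfolding GG_def CC_def by simp

lemma GG_deriv: "(GG has_real_derivative (- 2 * (z + k + \<sigma> * (\<theta> + z)^2))) (at z)"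
  unfolding GG_def FF_def by (auto intro!: derivative_eq_intros simp: power2_eq_square algebra_simps)

lemma GG_cont: "continuous_on S GG"
  unfolding GG_def FF_def CC_def by (intro continuous_intros)

definition "z1 = \<bar>\<xi>0\<bar> + \<bar>z0\<bar> + k + 1"

lemma z1_gt: "z0 < z1" unfolding z1_def using k by linarith

lemma GG_z1: "GG z1 \<le> 0"
proof -
  have c: "(\<theta> + z0)^3 \<le> (\<theta> + z1)^3" using z1_gt by (intro power_mono_odd) auto
  have "(2*\<sigma>/3) * (\<theta> + z0)^3 \<le> (2*\<sigma>/3) * (\<theta> + z1)^3" using c sg by (intro mult_left_mono) auto
  moreover have "\<xi>0^2 + (z0+k)^2 \<le> (z1+k)^2"
  proof -
    have h: "\<bar>z0 + k\<bar> \<le> \<bar>z0\<bar> + k" using k by linarith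
    have "(z0+k)^2 \<le> (\<bar>z0\<bar> + k)^2" using h by (rule sq_le_of_abs)
    moreover have "\<xi>0^2 + (\<bar>z0\<bar> + k)^2 \<le> (\<bar>\<xi>0\<bar> + (\<bar>z0\<bar> + k))^2"
    proof -
      have "0 \<le> \<bar>\<xi>0\<bar> * (\<bar>z0\<bar> + k)" using k by simp
      then show ?thesis by (simp add: power2_eq_square algebra_simps)
    qed
    moreover have "(\<bar>\<xi>0\<bar> + (\<bar>z0\<bar> + k))^2 \<le> (z1+k)^2" unfolding z1_def using k
      by (intro power_mono) auto
    ultimately show ?thesis by linarith
  qed
  ultimately show ?thesis unfolding GG_def CC_def FF_def by linarith
qed

definition "MM = \<bar>z0\<bar> + \<bar>z1\<bar> + 1"
definition "LL = 2*MM + 2*k + 2*\<sigma>*(\<bar>\<theta>\<bar> + MM)^2 + 1"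

lemma LL_pos: "LL > 0" unfolding LL_def MM_def using k sg by (simp add: add_pos_nonneg)

lemma QQ_bounds:
  assumes "\<bar>x\<bar> \<le> MM" "\<bar>y\<bar> \<le> MM"
  shows "QQ x y \<le> LL" "- LL \<le> QQ x y"
proof -
  define P where "P = \<bar>\<theta>\<bar> + MM"
  have a: "\<bar>\<theta>+x\<bar> \<le> P" "\<bar>\<theta>+y\<bar> \<le> P" using assms unfolding P_def by linarith+
  have "(\<theta>+x)^2 \<le> P^2" "(\<theta>+y)^2 \<le> P^2" using a by (auto intro: sq_le_of_abs)
  moreover have "(\<theta>+x)*(\<theta>+y) \<le> P^2"
  proof -
    have "(\<theta>+x)*(\<theta>+y) \<le> \<bar>\<theta>+x\<bar> * \<bar>\<theta>+y\<bar>" by (metis abs_ge_self abs_mult)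
    also have "\<dots> \<le> P * P" using a by (intro mult_mono) auto
    finally show ?thesis by (simp add: power2_eq_square)
  qed
  ultimately have s3: "(\<theta>+x)^2 + (\<theta>+x)*(\<theta>+y) + (\<theta>+y)^2 \<le> 3 * P^2" by linarith
  have s0: "0 \<le> (\<theta>+x)^2 + (\<theta>+x)*(\<theta>+y) + (\<theta>+y)^2"
  proof -
    have "(\<theta>+x)^2 + (\<theta>+x)*(\<theta>+y) + (\<theta>+y)^2 = ((\<theta>+x) + (\<theta>+y)/2)^2 + 3/4 * (\<theta>+y)^2"
      by (simp add: power2_eq_square field_simps)
    then show ?thesis by simp
  qed
  have t1: "(2*\<sigma>/3) * ((\<theta>+x)^2 + (\<theta>+x)*(\<theta>+y) + (\<theta>+y)^2) \<le> (2*\<sigma>/3) * (3 * P^2)"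
    using s3 sg by (intro mult_left_mono) auto
  have t0: "0 \<le> (2*\<sigma>/3) * ((\<theta>+x)^2 + (\<theta>+x)*(\<theta>+y) + (\<theta>+y)^2)" using s0 sg by simp
  show "QQ x y \<le> LL" using t1 assms k unfolding QQ_def LL_def P_def by (simp add: algebra_simps)
  show "- LL \<le> QQ x y" using t0 assms k sg unfolding QQ_def LL_def P_def
    by (smt (verit) zero_le_power2 mult_nonneg_nonneg)
qed

definition "SS = {z. z0 \<le> z \<and> z \<le> z1 \<and> GG z \<le> 0}"
definition "zs = Inf SS"

lemma zs_props: "zs \<in> SS" "z0 < zs" "zs \<le> z1" "GG zs \<le> 0"
    and zs_pos: "\<And>z. z0 \<le> z \<Longrightarrow> z < zs \<Longrightarrow> GG z > 0"
proof -
  have ne: "SS \<noteq> {}" using GG_z1 z1_gt unfolding SS_def by auto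
  have bb: "bdd_below SS" unfolding SS_def by (auto intro: bdd_belowI[of _ z0])
  have "SS = {z0..z1} \<inter> {z. GG z \<le> (\<lambda>_. 0) z}" unfolding SS_def by auto
  moreover have "closed {z. GG z \<le> (\<lambda>_. 0) z}"
    by (rule closed_Collect_le) (auto intro: GG_cont continuous_intros)
  ultimately have cl: "closed SS" by (simp add: closed_Int)
  show m: "zs \<in> SS" unfolding zs_def by (rule closed_contains_Inf[OF ne bb cl])
  then show "zs \<le> z1" "GG zs \<le> 0" unfolding SS_def by auto
  have "z0 \<le> zs" using m unfolding SS_def by auto
  moreover have "zs \<noteq> z0" using m GG_z0 x0 unfolding SS_def by auto
  ultimately show "z0 < zs" by simp
  fix z assume "z0 \<le> z" "z < zs"
  show "GG z > 0"
  proof (rule ccontr)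
    assume "\<not> GG z > 0"
    then have "z \<in> SS" using \<open>z0 \<le> z\<close> \<open>z < zs\<close> \<open>zs \<le> z1\<close> unfolding SS_def by auto
    then have "zs \<le> z" unfolding zs_def using bb by (rule cInf_lower)
    then show False using \<open>z < zs\<close> by simp
  qed
qed

lemma GG_lip_right:
  assumes "z0 \<le> z" "z \<le> zs"
  shows "GG z \<le> LL * (zs - z)"
proof -
  have b: "\<bar>z\<bar> \<le> MM" "\<bar>zs\<bar> \<le> MM" using assms zs_props z1_gt unfolding MM_def by linarith+
  have "GG z - GG zs = (zs - z) * QQ zs z" using FF_diff[of zs z] unfolding GG_def by simp
  also have "\<dots> \<le> (zs - z) * LL" using QQ_bounds(1)[OF b(2) b(1)] assms by (intro mult_left_mono) auto
  finally show ?thesis using zs_props(4) by (simp add: algebra_simps)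
qed

definition "aa = z0 - min 1 (\<xi>0^2 / (2 * LL))"

lemma aa_lt: "aa < z0" unfolding aa_def using LL_pos x0 by simp

lemma GG_left:
  assumes "aa \<le> z" "z \<le> z0"
  shows "GG z \<ge> \<xi>0^2 / 2"
proof -
  have d1: "z0 - z \<le> 1" "z0 - z \<le> \<xi>0^2 / (2 * LL)" using assms unfolding aa_def by auto
  have b: "\<bar>z\<bar> \<le> MM" "\<bar>z0\<bar> \<le> MM" using d1 assms unfolding MM_def by linarith+
  have "GG z - GG z0 = (z0 - z) * QQ z0 z" using FF_diff[of z0 z] unfolding GG_def by simp
  also have "\<dots> \<ge> (z0 - z) * (- LL)" using QQ_bounds(2)[OF b(2) b(1)] assms by (intro mult_left_mono) auto
  finally have "GG z \<ge> \<xi>0^2 - (z0 - z) * LL" using GG_z0 by simp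
  moreover have "(z0 - z) * LL \<le> \<xi>0^2 / (2 * LL) * LL" using d1 LL_pos by (intro mult_right_mono) auto
  moreover have "\<xi>0^2 / (2 * LL) * LL = \<xi>0^2 / 2" using LL_pos by simp
  ultimately show ?thesis by linarith
qed

lemma GG_pos: "aa \<le> z \<Longrightarrow> z < zs \<Longrightarrow> GG z > 0"
proof -
  assume "aa \<le> z" "z < zs"
  show "GG z > 0"
  proof (cases "z \<le> z0")
    case True
    then have "GG z \<ge> \<xi>0^2 / 2" using GG_left \<open>aa \<le> z\<close> by simp
    moreover have "\<xi>0^2 > 0" using x0 by simp
    ultimately show ?thesis by linarith
  next
    case False then show ?thesis using zs_pos \<open>z < zs\<close> by simp
  qed
qed

definition "gg z = 1 / GG z"
definition "Phi z = integral {aa..z} gg - integral {aa..z0} gg"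

lemma Phi_deriv:
  assumes "aa < z" "z < zs"
  shows "(Phi has_real_derivative gg z) (at z)"
proof -
  define b where "b = (z + zs) / 2"
  have zb: "z < b" "b < zs" using assms unfolding b_def by auto
  have "continuous_on {aa..b} gg" unfolding gg_def
  proof (intro continuous_intros GG_cont ballI)
    fix w assume "w \<in> {aa..b}"
    then show "GG w \<noteq> 0" using GG_pos[of w] zb by auto
  qed
  from integral_has_real_derivative[OF this, of z]
  have "((\<lambda>x. integral {aa..x} gg) has_real_derivative gg z) (at z within {aa..b})"
    using assms zb by auto
  moreover have "at z within {aa..b} = at z" by (rule at_within_interior) (use assms zb in auto)
  ultimately have d: "((\<lambda>x. integral {aa..x} gg) has_real_derivative gg z) (at z)" by simp
  show ?thesis unfolding Phi_def using DERIV_diff[OF d DERIV_const[of "integral {aa..z0} gg"]] by simp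
qed

lemma gg_pos: "aa \<le> z \<Longrightarrow> z < zs \<Longrightarrow> gg z > 0"
  unfolding gg_def using GG_pos by simp

lemma Phi_z0: "Phi z0 = 0" unfolding Phi_def by simp

lemma Phi_cont: "aa < z \<Longrightarrow> z < zs \<Longrightarrow> isCont Phi z"
  using Phi_deriv DERIV_isCont by blast

lemma Phi_mono:
  assumes "aa < x" "x < y" "y < zs"
  shows "Phi x < Phi y"
proof (rule DERIV_pos_imp_increasing[OF assms(2)])
  fix w assume "x \<le> w" "w \<le> y"
  then show "\<exists>d. (Phi has_real_derivative d) (at w) \<and> d > 0"
    using Phi_deriv[of w] gg_pos[of w] assms by (intro exI[of _ "gg w"]) auto
qed

lemma Phi_div:
  assumes "z0 \<le> z" "z < zs"
  shows "Phi z \<ge> (ln (zs - z0) - ln (zs - z)) / LL"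
proof -
  define h where "h w = Phi w + ln (zs - w) / LL" for w
  have "h z0 \<le> h z"
  proof (rule DERIV_nonneg_imp_nondecreasing[OF assms(1)])
    fix w assume w: "z0 \<le> w" "w \<le> z"
    have aw: "aa < w" "w < zs" using w assms aa_lt by auto
    have d1: "((\<lambda>w. ln (zs - w) / LL) has_real_derivative (- inverse (zs - w) / LL)) (at w)"
      using aw LL_pos by (auto intro!: derivative_eq_intros simp: inverse_eq_divide ac_simps)
    have d: "(h has_real_derivative gg w - inverse (zs - w) / LL) (at w)"
      unfolding h_def using DERIV_add[OF Phi_deriv[OF aw] d1] by simp
    have G0: "GG w > 0" using GG_pos aw by simp
    have "GG w \<le> LL * (zs - w)" using GG_lip_right w assms by simp
    then have "1 / (LL * (zs - w)) \<le> 1 / GG w" using G0 by (intro divide_left_mono) auto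
    moreover have "inverse (zs - w) / LL = 1 / (LL * (zs - w))" by (simp add: inverse_eq_divide ac_simps)
    ultimately have "inverse (zs - w) / LL \<le> gg w" unfolding gg_def by simp
    then show "\<exists>y. (h has_real_derivative y) (at w) \<and> y \<ge> 0" using d by (intro exI) auto
  qed
  then show ?thesis unfolding h_def Phi_z0 by (simp add: diff_divide_distrib)
qed

lemma Phi_big:
  assumes "t \<ge> 0"
  shows "\<exists>zb. z0 \<le> zb \<and> zb < zs \<and> Phi zb \<ge> t"
proof -
  define e where "e = exp (- LL * t)"
  have e: "0 < e" "e \<le> 1" unfolding e_def using assms LL_pos by (auto simp: mult_nonneg_nonneg)
  define zb where "zb = zs - (zs - z0) * e"
  have zz: "z0 < zs" using zs_props by simp
  have ez: "(zs - z0) * e \<le> (zs - z0)" using e zz by (simp add: mult_left_le)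
  have ez2: "0 < (zs - z0) * e" using e zz by simp
  have p: "z0 \<le> zb" "zb < zs" unfolding zb_def using ez ez2 by linarith+
  have "ln (zs - zb) = ln (zs - z0) - LL * t" unfolding zb_def e_def using zz
    by (simp add: ln_mult)
  then have "Phi zb \<ge> (LL * t) / LL" using Phi_div[OF p] by simp
  then show ?thesis using p LL_pos by auto
qed

definition "a1 = (aa + z0) / 2"

lemma a1_props: "aa < a1" "a1 < z0" "Phi a1 < 0"
proof -
  show "aa < a1" "a1 < z0" unfolding a1_def using aa_lt by auto
  then show "Phi a1 < 0" using Phi_mono[of a1 z0] zs_props Phi_z0 by simp
qed

lemma Phi_inj:
  assumes "a1 \<le> x" "x < zs" "a1 \<le> y" "y < zs" "Phi x = Phi y"
  shows "x = y"
proof (rule ccontr)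
  assume "x \<noteq> y"
  then consider "x < y" | "y < x" by linarith
  then show False
  proof cases
    case 1 then show False using Phi_mono[of x y] assms a1_props by simp
  next
    case 2 then show False using Phi_mono[of y x] assms a1_props by simp
  qed
qed

lemma Phi_surj:
  assumes "Phi a1 \<le> t"
  shows "\<exists>z. a1 \<le> z \<and> z < zs \<and> Phi z = t"
proof -
  obtain zb where zb: "z0 \<le> zb" "zb < zs" "Phi zb \<ge> max t 0" using Phi_big[of "max t 0"] by auto
  have "\<exists>x\<ge>a1. x \<le> zb \<and> Phi x = t"
  proof (rule IVT)
    show "Phi a1 \<le> t" by fact
    show "t \<le> Phi zb" using zb by simp
    show "a1 \<le> zb" using zb a1_props by simp
    show "\<forall>x. a1 \<le> x \<and> x \<le> zb \<longrightarrow> isCont Phi x"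
      using Phi_cont a1_props zb by auto
  qed
  then show ?thesis using zb by (metis le_less_trans)
qed

definition "ZZ t = (THE z. a1 \<le> z \<and> z < zs \<and> Phi z = t)"

lemma ZZ_props:
  assumes "Phi a1 \<le> t"
  shows "a1 \<le> ZZ t" "ZZ t < zs" "Phi (ZZ t) = t"
proof -
  have "\<exists>!z. a1 \<le> z \<and> z < zs \<and> Phi z = t"
    using Phi_surj[OF assms] Phi_inj by blast
  from theI'[OF this] show "a1 \<le> ZZ t" "ZZ t < zs" "Phi (ZZ t) = t" unfolding ZZ_def by auto
qed

lemma ZZ_Phi: "a1 \<le> z \<Longrightarrow> z < zs \<Longrightarrow> ZZ (Phi z) = z"
  unfolding ZZ_def by (rule the_equality) (auto intro: Phi_inj)

lemma ZZ_deriv: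
  assumes t: "Phi a1 < t"
  shows "(ZZ has_real_derivative GG (ZZ t)) (at t)"
proof -
  define x where "x = ZZ t"
  have x: "a1 \<le> x" "x < zs" "Phi x = t" using ZZ_props[of t] t unfolding x_def by auto
  have xa: "a1 < x" using x t by (cases "x = a1") auto
  define d where "d = min (x - a1) (zs - x) / 2"
  have d: "d > 0" unfolding d_def using xa x by simp
  have wr: "a1 < w \<and> w < zs" if "\<bar>w - x\<bar> \<le> d" for w
  proof -
    have "w - x \<le> d" "x - w \<le> d" using that by (auto simp: abs_le_iff)
    moreover have "2 * d \<le> x - a1" "2 * d \<le> zs - x" unfolding d_def by auto
    ultimately show ?thesis using xa x by linarith
  qed
  have inj: "ZZ (Phi w) = w" if "\<bar>w - x\<bar> \<le> d" for w using ZZ_Phi wr[OF that] by simp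
  have cw: "isCont Phi w" if "\<bar>w - x\<bar> \<le> d" for w using Phi_cont wr[OF that] a1_props by simp
  have "isCont ZZ (Phi x)" by (rule isCont_inverse_function[OF d inj cw])
  then have cont: "isCont ZZ t" using x by simp
  have gx: "gg x > 0" using gg_pos x a1_props by simp
  have der: "(Phi has_real_derivative gg (ZZ t)) (at (ZZ t))"
    using Phi_deriv[of x] xa x a1_props unfolding x_def by simp
  have neq: "gg (ZZ t) \<noteq> 0" using gx unfolding x_def by simp
  have inj2: "Phi (ZZ y) = y" if "Phi a1 < y" "y < t + 1" for y using ZZ_props(3) that by simp
  have "(ZZ has_real_derivative inverse (gg (ZZ t))) (at t)"
    by (rule DERIV_inverse_function[where b="t+1", OF der neq t _ inj2 cont]) simp
  then show ?thesis unfolding gg_def by simp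
qed

lemma exists_sol: "\<exists>\<xi> z. is_sol \<theta> k \<sigma> \<xi> z \<and> \<xi> 0 = \<xi>0 \<and> z 0 = z0"
proof -
  define s where "s = sgn \<xi>0"
  have s2: "s * s = 1" unfolding s_def using x0 by (cases "\<xi>0 > 0") (auto simp: sgn_real_def)
  define xi where "xi t = s * sqrt (GG (ZZ t))" for t
  have sol: "is_sol \<theta> k \<sigma> xi ZZ" unfolding is_sol_def
  proof (intro allI impI conjI)
    fix t :: real assume t0: "0 \<le> t"
    then have t: "Phi a1 < t" using a1_props by simp
    define G where "G = GG (ZZ t)"
    define q where "q = ZZ t + k + \<sigma> * (\<theta> + ZZ t)^2"
    have Gp: "G > 0" unfolding G_def using GG_pos ZZ_props[of t] t a1_props by simp
    have dZ: "(ZZ has_real_derivative G) (at t)" unfolding G_def using ZZ_deriv[OF t] .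
    have dGZ: "((\<lambda>t. GG (ZZ t)) has_real_derivative (- 2 * q) * G) (at t)"
      unfolding q_def using DERIV_chain2[OF GG_deriv dZ] .
    have dS0: "((\<lambda>t. sqrt (GG (ZZ t))) has_real_derivative inverse (sqrt (GG (ZZ t))) / 2 * ((- 2 * q) * G)) (at t)"
      using DERIV_chain2[OF DERIV_real_sqrt[OF Gp[unfolded G_def]] dGZ] .
    have dS: "((\<lambda>t. sqrt (GG (ZZ t))) has_real_derivative inverse (sqrt G) / 2 * ((- 2 * q) * G)) (at t)"
      using dS0 by (simp only: G_def[symmetric])
    have dX: "(xi has_real_derivative s * (inverse (sqrt G) / 2 * ((- 2 * q) * G))) (at t)"
      unfolding xi_def using DERIV_cmult[OF dS] .
    have sG: "inverse (sqrt G) * G = sqrt G"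
    proof -
      have "sqrt G * sqrt G = G" using Gp by simp
      moreover have "sqrt G \<noteq> 0" using Gp by simp
      ultimately show ?thesis by (metis mult.assoc mult.left_neutral right_inverse mult.commute)
    qed
    have "s * (inverse (sqrt G) / 2 * ((- 2 * q) * G)) = - q * s * (inverse (sqrt G) * G)"
      by (simp add: ac_simps)
    then have eq: "s * (inverse (sqrt G) / 2 * ((- 2 * q) * G)) = - q * (s * sqrt G)"
      unfolding sG by (simp add: ac_simps)
    have xiG: "s * sqrt G = xi t" unfolding xi_def G_def ..
    have dX2: "(xi has_real_derivative - q * xi t) (at t)" using dX unfolding eq xiG .
    then have "(xi has_real_derivative (- (ZZ t + k + \<sigma> * (\<theta> + ZZ t)^2) * xi t)) (at t)"
      unfolding q_def .
    then show "(xi has_real_derivative (- (ZZ t + k + \<sigma> * (\<theta> + ZZ t)^2) * xi t)) (at t within {0..})"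
      by (rule has_field_derivative_at_within)
    have "(xi t)^2 = (s * s) * (sqrt G * sqrt G)" unfolding xi_def G_def by (simp add: power2_eq_square ac_simps)
    also have "\<dots> = G" using s2 Gp by simp
    finally have "(xi t)^2 = G" .
    then show "(ZZ has_real_derivative (xi t)^2) (at t within {0..})"
      using has_field_derivative_at_within[OF dZ] by simp
  qed
  have Z0: "ZZ 0 = z0" using ZZ_Phi[of z0] Phi_z0 a1_props zs_props by simp
  have "xi 0 = \<xi>0" unfolding xi_def Z0 GG_z0 s_def by (simp add: sgn_mult_abs)
  then show ?thesis using sol Z0 by blast
qed

end

lemma forward_complete:
  assumes "k > 0" "\<sigma> \<ge> 0" shows "forward_complete \<theta> k \<sigma>"
  unfolding forward_complete_def
proof (intro allI)
  fix \<xi>0 z0 :: real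
  show "\<exists>\<xi> z. is_sol \<theta> k \<sigma> \<xi> z \<and> \<xi> 0 = \<xi>0 \<and> z 0 = z0"
  proof (cases "\<xi>0 = 0")
    case True
    have "is_sol \<theta> k \<sigma> (\<lambda>_. 0) (\<lambda>_. z0)" using equilibrium[of \<theta> k \<sigma> z0] unfolding is_equilibrium_def by simp
    then show ?thesis using True by blast
  next
    case False
    then show ?thesis using exists_sol[OF assms False] by blast
  qed
qed


theorem mainTheorem8:
  fixes \<theta> k \<sigma> :: real
  assumes "k > 0" and "\<sigma> \<ge> 0"
  shows "forward_complete \<theta> k \<sigma> \<and> lagrange_stable \<theta> k \<sigma> \<and> lyapunov_stable \<theta> k \<sigma>
    \<and> (\<forall>z. is_equilibrium \<theta> k \<sigma> (0, z)) \<and> GAOS \<theta> k \<sigma>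
    \<and> (\<sigma> = 0 \<longrightarrow> \<not> (\<exists>T>0. \<forall>\<xi> z. is_sol \<theta> k \<sigma> \<xi> z \<longrightarrow>
          norm (\<xi> 0, z 0) \<le> sqrt (1 + (k + 1)^2) \<longrightarrow> (\<forall>t\<ge>T. \<bar>\<xi> t\<bar> \<le> 1/2)))"
proof -
  have e: "\<forall>z. is_equilibrium \<theta> k \<sigma> (0, z)" using equilibrium by blast
  have u: "\<sigma> = 0 \<longrightarrow> \<not> (\<exists>T>0. \<forall>\<xi> z. is_sol \<theta> k \<sigma> \<xi> z \<longrightarrow>
          norm (\<xi> 0, z 0) \<le> sqrt (1 + (k + 1)^2) \<longrightarrow> (\<forall>t\<ge>T. \<bar>\<xi> t\<bar> \<le> 1/2))"
    using not_ugaos[OF assms(1), of \<theta>] by blast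
  show ?thesis using forward_complete[OF assms] lagrange[OF assms] lyapunov[OF assms] e gaos[OF assms] u
    by blast
qed

end
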